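(* Let $(D,D_{t'})$ be a proper pair (in the sense allowing contemporaneous effects) and let $A,C\subseteq V\cup W$ and $B\subseteq V$ be pairwise disjoint. Let $E\subseteq V$ be a tail ancestral set such that $\mathrm{de}_\bullet(B)\cap E=\emptyset$, $E\subseteq C$ and $\mathrm{pa}_\bullet(B)\subseteq E$. If $B$ is $\delta$-separated from $A$ given $C$ in $D$, then for every $0<t\le t'$, $\nu_t^B$ is $d$-separated from $\bar\nu_{t-1}^A$ given $\bar\nu_{t-1}^{B\cup C}\cup\nu_t^E$ in $D_{t'}$.
   Context: $V$, $W$ are finite disjoint sets ($W$ = baseline nodes). Tailed directed graph: graph on $V\cup W$ with directed edges $i\to j$ and tailed directed edges $i\bullet\!\!\to j$; $i\ast\!\!\to j$ means $i\to j$ or $i\bullet\!\!\to j$. Only baseline nodes have edges into baseline nodes, and these are tailed. $D^-$ is the DG with $i\to j$ iff $i\ast\!\!\to j$ in $D$. $\mathrm{de}_\bullet(B)$: nodes $k$ reachable by a directed path of tailed edges only starting in $B$; $\mathrm{pa}_\bullet(B)$: nodes $k$ with $k\bullet\!\!\to j$, $j\in B$; these sets exclude $B$. A set $E\subseteq V$ is tail ancestral if there are no $i\in V\setminus E$, $j\in E$ with $i\bullet\!\!\to j$. DG terminology: path = walk without repeated nodes; collider = non-endpoint node with both adjacent edges pointing into it; $\mathrm{an}(C)$ = nodes with a directed path into $C$. $\delta$-separation in a DG $G$: with $G^B$ obtained by deleting all edges $i\to j$ with $i\in B$, $B$ is $\delta$-separated from $A$ given $C$ if every path in $G^B$ between $A$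 and $B$ contains a noncollider in $C$ or a collider not in $\mathrm{an}_G(C)\cup C$. In a tailed directed graph $D$, $\delta$-separation means $\delta$-separation in $D^-$. $d$-separation in a DAG: same blocking condition on paths of the DAG, with no edge deletion. Unrolling: the unrolled version of $D$ on $t'$ lags is the DAG $D_{t'}$ on nodes $V^{t'}=\bigcup_{i\in V}\{\nu_0^i,\dots,\nu_{t'}^i\}$ and $W^{t'}=\{\nu_0^i:i\in W\}$, with $\nu_s^i\to\nu_t^j$ if $s<t$ and $i\ast\!\!\to j$, and $\nu_t^i\to\nu_t^j$ if $i\bullet\!\!\to j$. Rolling: the rolled version of a DAG $D_{t'}$ on such a node set is the tailed directed graph with $i\ast\!\!\to j$ if $\nu_s^i\to\nu_t^j$ for some $s\le t$, and $i\bullet\!\!\to j$ iff $\nu_t^i\to\nu_t^j$ for some $t$. Standing assumption: if $\nu_t^i\to\nu_t^j$ is present then so is $\nu_s^i\to\nu_u^j$ for some $s<u$. $(D,D_{t'})$ is proper if $D$ is the rolled version of $D_{t'}$ or $D_{t'}$ is the unrolled version of $D$. Notation: $\nu_t^A=\{\nu_t^i:i\in A\}$, $\bar\nu_t^A=\{\nu_s^i:i\in A, s\le t\}$ (for baseline $i$, only $\nu_0^i$). *)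

theory Defs
  imports Main
begin

text \<open>A tailed directed graph on node set V \<union> W is given by its set of directed
 edges i \<rightarrow> j (dedges) and its set of tailed directed edges i \<bullet>\<rightarrow> j (tedges).\<close>

record 'a tdg =
  dedges :: "('a \<times> 'a) set"
  tedges :: "('a \<times> 'a) set"

text \<open>i *\<rightarrow> j : i \<rightarrow> j or i \<bullet>\<rightarrow> j. This is also the edge set of the DG D^-.\<close>
definition star_edges :: "'a tdg \<Rightarrow> ('a \<times> 'a) set" where
  "star_edges D = dedges D \<union> tedges D"

definition is_tdg :: "'a set \<Rightarrow> 'a set \<Rightarrow> 'a tdg \<Rightarrow> bool" where
  "is_tdg V W D \<longleftrightarrow> finite V \<and> finite W \<and> V \<inter> W = {} \<and>
     star_edges D \<subseteq> (V \<union> W) \<times> (V \<union> W) \<and>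
     (\<forall>i j. (i, j) \<in> star_edges D \<and> j \<in> W \<longrightarrow>
        i \<in> W \<and> (i, j) \<in> tedges D \<and> (i, j) \<notin> dedges D)"

definition tail_de :: "'a tdg \<Rightarrow> 'a set \<Rightarrow> 'a set" where
  "tail_de D B = {k. \<exists>b\<in>B. (b, k) \<in> (tedges D)\<^sup>+} - B"

definition tail_pa :: "'a tdg \<Rightarrow> 'a set \<Rightarrow> 'a set" where
  "tail_pa D B = {k. \<exists>j\<in>B. (k, j) \<in> tedges D} - B"

definition tail_ancestral :: "'a set \<Rightarrow> 'a tdg \<Rightarrow> 'a set \<Rightarrow> bool" where
  "tail_ancestral V D E \<longleftrightarrow> E \<subseteq> V \<and>
     \<not> (\<exists>i\<in>V - E. \<exists>j\<in>E. (i, j) \<in> tedges D)"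

definition is_path :: "('n \<times> 'n) set \<Rightarrow> 'n list \<Rightarrow> bool list \<Rightarrow> bool" where
  "is_path G xs ds \<longleftrightarrow> xs \<noteq> [] \<and> distinct xs \<and> length ds = length xs - 1 \<and>
     (\<forall>k < length ds. if ds ! k then (xs ! k, xs ! Suc k) \<in> G
                                 else (xs ! Suc k, xs ! k) \<in> G)"

text \<open>Position k (a non-endpoint, 0 < k < length xs - 1) is a collider if both
 adjacent edges point into xs!k.\<close>
definition is_collider :: "bool list \<Rightarrow> nat \<Rightarrow> bool" where
  "is_collider ds k \<longleftrightarrow> 0 < k \<and> k < length ds \<and> ds ! (k - 1) \<and> \<not> ds ! k"

definition is_noncollider :: "bool list \<Rightarrow> nat \<Rightarrow> bool" where
  "is_noncollider ds k \<longleftrightarrow> 0 < k \<and> k < length ds \<and> \<not> is_collider ds k"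

definition anc :: "('n \<times> 'n) set \<Rightarrow> 'n set \<Rightarrow> 'n set" where
  "anc G C = {k. \<exists>c\<in>C. (k, c) \<in> G\<^sup>+}"

definition path_blocked :: "('n \<times> 'n) set \<Rightarrow> 'n set \<Rightarrow> 'n list \<Rightarrow> bool list \<Rightarrow> bool" where
  "path_blocked G C xs ds \<longleftrightarrow>
     (\<exists>k. (is_noncollider ds k \<and> xs ! k \<in> C) \<or>
          (is_collider ds k \<and> xs ! k \<notin> anc G C \<union> C))"

definition sep_gen :: "('n \<times> 'n) set \<Rightarrow> ('n \<times> 'n) set \<Rightarrow> 'n set \<Rightarrow> 'n set \<Rightarrow> 'n set \<Rightarrow> bool" where
  "sep_gen G Gp A B C \<longleftrightarrow>
     (\<forall>xs ds. is_path Gp xs ds \<and> hd xs \<in> A \<and> last xs \<in> B \<longrightarrow> path_blocked G C xs ds)"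

definition delta_sep :: "('n \<times> 'n) set \<Rightarrow> 'n set \<Rightarrow> 'n set \<Rightarrow> 'n set \<Rightarrow> bool" where
  "delta_sep G A B C \<longleftrightarrow> sep_gen G {(i, j) \<in> G. i \<notin> B} A B C"

definition d_sep :: "('n \<times> 'n) set \<Rightarrow> 'n set \<Rightarrow> 'n set \<Rightarrow> 'n set \<Rightarrow> bool" where
  "d_sep G A B C \<longleftrightarrow> sep_gen G G A B C"

definition tdg_delta_sep :: "'a tdg \<Rightarrow> 'a set \<Rightarrow> 'a set \<Rightarrow> 'a set \<Rightarrow> bool" where
  "tdg_delta_sep D A B C \<longleftrightarrow> delta_sep (star_edges D) A B C"

section \<open>Unrolled DAGs; node \<nu>_s^i is the pair (i, s)\<close>

definition unrolled_nodes :: "'a set \<Rightarrow> 'a set \<Rightarrow> nat \<Rightarrow> ('a \<times> nat) set" where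
  "unrolled_nodes V W t' = {(i, s). i \<in> V \<and> s \<le> t'} \<union> {(i, 0) | i. i \<in> W}"

definition unroll :: "'a set \<Rightarrow> 'a set \<Rightarrow> nat \<Rightarrow> 'a tdg \<Rightarrow> (('a \<times> nat) \<times> ('a \<times> nat)) set" where
  "unroll V W t' D = {((i, s), (j, t)).
      (i, s) \<in> unrolled_nodes V W t' \<and> (j, t) \<in> unrolled_nodes V W t' \<and>
      ((s < t \<and> (i, j) \<in> star_edges D) \<or> (s = t \<and> (i, j) \<in> tedges D))}"

definition is_rolled :: "'a tdg \<Rightarrow> (('a \<times> nat) \<times> ('a \<times> nat)) set \<Rightarrow> bool" where
  "is_rolled D G \<longleftrightarrow>
     star_edges D = {(i, j). \<exists>s t. s \<le> t \<and> ((i, s), (j, t)) \<in> G} \<and>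
     tedges D = {(i, j). \<exists>t. ((i, t), (j, t)) \<in> G}"

text \<open>G is a DAG on the unrolled node set, all edges go forward in time (s \<le> t),
 and the standing assumption holds (for non-baseline targets).\<close>
definition is_unrolled_dag :: "'a set \<Rightarrow> 'a set \<Rightarrow> nat \<Rightarrow> (('a \<times> nat) \<times> ('a \<times> nat)) set \<Rightarrow> bool" where
  "is_unrolled_dag V W t' G \<longleftrightarrow>
     G \<subseteq> unrolled_nodes V W t' \<times> unrolled_nodes V W t' \<and> acyclic G \<and>
     (\<forall>i s j t. ((i, s), (j, t)) \<in> G \<longrightarrow> s \<le> t) \<and>
     (\<forall>i j t. ((i, t), (j, t)) \<in> G \<and> j \<in> V \<longrightarrow>
        (\<exists>s u. s < u \<and> ((i, s), (j, u)) \<in> G))"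

definition proper_pair :: "'a set \<Rightarrow> 'a set \<Rightarrow> nat \<Rightarrow> 'a tdg \<Rightarrow> (('a \<times> nat) \<times> ('a \<times> nat)) set \<Rightarrow> bool" where
  "proper_pair V W t' D G \<longleftrightarrow> is_tdg V W D \<and> is_unrolled_dag V W t' G \<and>
     (is_rolled D G \<or> G = unroll V W t' D)"

definition nu :: "nat \<Rightarrow> 'a set \<Rightarrow> ('a \<times> nat) set" where
  "nu t A = {(i, t) | i. i \<in> A}"

definition nu_bar :: "'a set \<Rightarrow> nat \<Rightarrow> 'a set \<Rightarrow> ('a \<times> nat) set" where
  "nu_bar W t A = {(i, s) | i s. i \<in> A \<and> i \<notin> W \<and> s \<le> t} \<union> {(i, 0) | i. i \<in> A \<and> i \<in> W}"

end

theory Submission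
  imports Defs
begin


definition is_walk :: "('n \<times> 'n) set \<Rightarrow> 'n list \<Rightarrow> bool list \<Rightarrow> bool" where
  "is_walk G xs ds \<longleftrightarrow> xs \<noteq> [] \<and> length ds = length xs - 1 \<and>
     (\<forall>k < length ds. if ds ! k then (xs ! k, xs ! Suc k) \<in> G
                                 else (xs ! Suc k, xs ! k) \<in> G)"

lemma dir_change:
  assumes "ds ! i" "\<not> ds ! j" "i < j"
  shows "\<exists>p. i < p \<and> p \<le> j \<and> ds ! (p - 1) \<and> \<not> ds ! p \<and> (\<forall>l. i \<le> l \<and> l < p \<longrightarrow> ds ! l)"
proof -
  let ?P = "\<lambda>p. i < p \<and> \<not> ds ! p"
  have Pj: "?P j" using assms by simp
  define p where "p = (LEAST p. ?P p)"
  have Pp: "?P p" unfolding p_def by (rule LeastI[of ?P, OF Pj])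
  have pj: "p \<le> j" unfolding p_def by (rule Least_le[of ?P, OF Pj])
  have all: "\<forall>l. i \<le> l \<and> l < p \<longrightarrow> ds ! l"
  proof (intro allI impI)
    fix l assume l: "i \<le> l \<and> l < p"
    show "ds ! l"
    proof (cases "l = i")
      case True then show ?thesis using assms by simp
    next
      case False
      then have "i < l" using l by simp
      moreover have "\<not> ?P l" using l not_less_Least[of l ?P] unfolding p_def by blast
      ultimately show ?thesis by simp
    qed
  qed
  have "i \<le> p - 1 \<and> p - 1 < p" using Pp by auto
  then have "ds ! (p - 1)" using all by blast
  then show ?thesis using Pp pj all by blast
qed

lemma dir_change_left:
  assumes "\<not> ds ! j"
  shows "(\<forall>l\<le>j. \<not> ds ! l) \<or> (\<exists>p. 0 < p \<and> p \<le> j \<and> ds ! (p - 1) \<and> (\<forall>l. p \<le> l \<and> l \<le> j \<longrightarrow> \<not> ds ! l))"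
proof -
  let ?P = "\<lambda>q. \<forall>l. q \<le> l \<and> l \<le> j \<longrightarrow> \<not> ds ! l"
  have Pj: "?P j" using assms by (metis le_antisym)
  define p where "p = (LEAST p. ?P p)"
  have Pp: "?P p" unfolding p_def by (rule LeastI[of ?P, OF Pj])
  have pj: "p \<le> j" unfolding p_def by (rule Least_le[of ?P, OF Pj])
  show ?thesis
  proof (cases "p = 0")
    case True then show ?thesis using Pp by auto
  next
    case False
    have "\<not> ?P (p - 1)" using not_less_Least[of "p - 1" ?P] False unfolding p_def by simp
    then obtain l where l: "p - 1 \<le> l" "l \<le> j" "ds ! l" by blast
    have "\<not> p \<le> l" using l Pp by blast
    then have "l = p - 1" using l by linarith
    then show ?thesis using l Pp pj False by blast
  qed
qed

lemma shortcut:
  assumes "is_walk Gp xs ds" "Gp \<subseteq> G" "\<not> path_blocked G C xs ds"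
  shows "\<exists>xs' ds'. is_path Gp xs' ds' \<and> \<not> path_blocked G C xs' ds' \<and> hd xs' = hd xs \<and> last xs' = last xs"
  using assms
proof (induction "length xs" arbitrary: xs ds rule: less_induct)
  case less
  show ?case
  proof (cases "distinct xs")
    case True
    then show ?thesis using less.prems unfolding is_walk_def is_path_def by blast
  next
    case False
    then obtain i0 j0 where ij0: "i0 < length xs" "j0 < length xs" "i0 \<noteq> j0" "xs ! i0 = xs ! j0"
      unfolding distinct_conv_nth by blast
    define i where "i = min i0 j0"
    define j where "j = max i0 j0"
    have ij: "i < j" "j < length xs" "xs ! i = xs ! j" using ij0 unfolding i_def j_def
      by (auto simp: min_def max_def)
    define n where "n = length xs"
    have lds: "length ds = n - 1" and ne: "xs \<noteq> []"
      and edges: "\<forall>k < length ds. if ds ! k then (xs ! k, xs ! Suc k) \<in> Gp else (xs ! Suc k, xs ! k) \<in> Gp"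
      using less.prems(1) unfolding is_walk_def n_def by auto
    define f where "f k = (if k < i then k else k + j - i)" for k
    define xs' where "xs' = take (Suc i) xs @ drop (Suc j) xs"
    define ds' where "ds' = take i ds @ drop j ds"
    have lx': "length xs' = n - (j - i)" unfolding xs'_def n_def using ij by auto
    have ld': "length ds' = length xs' - 1" unfolding ds'_def using ij lds lx' n_def by (auto simp: min_def)
    have nx: "xs' ! k = xs ! f k" if "k < length xs'" for k
    proof -
      consider "k < i" | "k = i" | "i < k" by linarith
      then show ?thesis
      proof cases
        case 1 then show ?thesis unfolding xs'_def f_def using ij by (simp add: nth_append)
      next
        case 2 then show ?thesis unfolding xs'_def f_def using ij by (simp add: nth_append)
      next
        case 3
        have e: "Suc (j + k - Suc i) = k + j - i" using 3 ij by linarith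
        show ?thesis unfolding xs'_def f_def using 3 ij that lx' n_def
          by (simp add: nth_append e)
      qed
    qed
    have nd: "ds' ! k = ds ! f k" if "k < length ds'" for k
      unfolding ds'_def f_def using ij that lds ld' lx' n_def by (auto simp: nth_append add.commute)
    have fbound: "f k < length ds" if "k < length ds'" for k
      using that unfolding f_def using ij lds ld' lx' n_def by auto
    have nxS: "xs' ! Suc k = xs ! Suc (f k)" if "k < length ds'" for k
    proof -
      have "Suc k < length xs'" using that ld' by simp
      then have "xs' ! Suc k = xs ! f (Suc k)" by (rule nx)
      also have "\<dots> = xs ! Suc (f k)"
      proof (cases "Suc k < i")
        case True then show ?thesis unfolding f_def by simp
      next
        case False
        then show ?thesis
        proof (cases "k < i")
          case True then have "k = i - 1" "Suc k = i" using False by auto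
          then show ?thesis unfolding f_def using ij True by auto
        next
          case False
          then have "Suc (k + j) - i = Suc (k + j - i)" using ij by linarith
          then show ?thesis unfolding f_def using ij False by auto
        qed
      qed
      finally show ?thesis .
    qed
    have walk': "is_walk Gp xs' ds'"
      unfolding is_walk_def
    proof (intro conjI allI impI)
      show "xs' \<noteq> []" using lx' ij n_def by auto
      show "length ds' = length xs' - 1" by (rule ld')
      fix k assume k: "k < length ds'"
      have "k < length xs'" using k ld' by simp
      then show "if ds' ! k then (xs' ! k, xs' ! Suc k) \<in> Gp else (xs' ! Suc k, xs' ! k) \<in> Gp"
        using edges fbound[OF k] nd[OF k] nx nxS[OF k] by simp
    qed
    have col_eq: "is_collider ds' k = is_collider ds (f k) \<and> is_noncollider ds' k = is_noncollider ds (f k)"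
      if "k \<noteq> i" "k < length ds'" "0 < k" for k
    proof -
      have "k - 1 < length ds'" using that by simp
      have fk: "f (k - 1) = f k - 1" "0 < f k" unfolding f_def using that ij by auto
      show ?thesis unfolding is_collider_def is_noncollider_def
        using that nd[of "k - 1"] nd[of k] fk fbound[of k] by auto
    qed
    have unbl: "\<not> path_blocked G C xs ds" by (rule less.prems(3))
    have valid: "\<not> path_blocked G C xs' ds'"
    proof
      assume "path_blocked G C xs' ds'"
      then obtain k where kb: "(is_noncollider ds' k \<and> xs' ! k \<in> C) \<or>
          (is_collider ds' k \<and> xs' ! k \<notin> anc G C \<union> C)" unfolding path_blocked_def by blast
      have k0: "0 < k" "k < length ds'" using kb unfolding is_collider_def is_noncollider_def by auto
      have xk: "xs' ! k = xs ! f k" using nx k0 ld' by simp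
      show False
      proof (cases "k = i")
        case False
        have ce: "is_collider ds' k = is_collider ds (f k)" "is_noncollider ds' k = is_noncollider ds (f k)"
          using col_eq[OF False k0(2) k0(1)] by auto
        have "path_blocked G C xs ds" unfolding path_blocked_def
          apply (rule exI[of _ "f k"]) using ce kb xk by simp
        then show False using unbl by simp
      next
        case True
        have fi: "f i = j" unfolding f_def by simp
        have jl: "j < length ds" using fbound[of k] k0 True fi by simp
        have i0: "0 < i" using True k0 by simp
        have il: "i < length ds" using ij jl by simp
        have d1: "ds' ! (i - 1) = ds ! (i - 1)" using nd[of "i - 1"] k0 True unfolding f_def by simp
        have d2: "ds' ! i = ds ! j" using nd[of i] k0 True fi by simp
        have v: "xs' ! k = xs ! i" using xk True fi ij by simp
        have occi: "\<not> ((is_noncollider ds i \<and> xs ! i \<in> C) \<or> (is_collider ds i \<and> xs ! i \<notin> anc G C \<union> C))"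
          using unbl unfolding path_blocked_def by blast
        have occj: "\<not> ((is_noncollider ds j \<and> xs ! j \<in> C) \<or> (is_collider ds j \<and> xs ! j \<notin> anc G C \<union> C))"
          using unbl unfolding path_blocked_def by blast
        show False
        proof (cases "is_collider ds' k")
          case False
          then have nc: "is_noncollider ds' k" "xs ! i \<in> C" using kb v by auto
          have "is_collider ds i" using occi nc i0 il unfolding is_noncollider_def by auto
          moreover have "is_collider ds j" using occj nc(2) ij(3) i0 ij(1) jl unfolding is_noncollider_def
            by auto
          ultimately have "is_collider ds' k" using True d1 d2 k0 unfolding is_collider_def by auto
          then show False using False by simp
        next
          case col: True
          then have notin: "xs ! i \<notin> anc G C \<union> C" using kb v unfolding is_noncollider_def by auto
          have a: "ds ! (i - 1)" "\<not> ds ! j" using col True d1 d2 unfolding is_collider_def by auto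
          have ci: "\<not> is_collider ds i" using occi notin by blast
          have cj: "\<not> is_collider ds j" using occj notin ij by auto
          have b1: "ds ! i" using ci a i0 il unfolding is_collider_def by auto
          have b2: "\<not> ds ! (j - 1)" using cj a ij jl unfolding is_collider_def by auto
          have "j - 1 \<noteq> i" using b1 b2 by auto
          then have ij1: "i < j - 1" using ij by linarith
          obtain p where p: "i < p" "p \<le> j - 1" "ds ! (p - 1)" "\<not> ds ! p"
            "\<forall>l. i \<le> l \<and> l < p \<longrightarrow> ds ! l"
            using dir_change[OF b1 b2 ij1] by blast
          have pc: "is_collider ds p" unfolding is_collider_def using p ij jl by auto
          have pin: "xs ! p \<in> anc G C \<union> C" using unbl pc unfolding path_blocked_def by blast
          have chain: "(xs ! i, xs ! q) \<in> Gp\<^sup>+" if "i < q" "q \<le> p" for q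
            using that
          proof (induction q)
            case 0 then show ?case by simp
          next
            case (Suc q)
            have dq: "ds ! q" using p Suc.prems by auto
            have "q < length ds" using p Suc.prems jl by linarith
            then have e: "(xs ! q, xs ! Suc q) \<in> Gp" using edges dq by auto
            show ?case
            proof (cases "q = i")
              case True then show ?thesis using e by auto
            next
              case False
              then have "(xs ! i, xs ! q) \<in> Gp\<^sup>+" using Suc by simp
              then show ?thesis using e by auto
            qed
          qed
          have "(xs ! i, xs ! p) \<in> G\<^sup>+" using chain[of p] p less.prems(2) trancl_mono by blast
          then have "xs ! i \<in> anc G C" using pin unfolding anc_def
            by (auto intro: trancl_trans)
          then show False using notin by simp
        qed
      qed
    qed
    have hd': "hd xs' = hd xs"
    proof -
      have "hd xs' = xs' ! 0" using walk' unfolding is_walk_def by (simp add: hd_conv_nth)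
      also have "\<dots> = xs ! f 0" using nx[of 0] walk' unfolding is_walk_def by simp
      also have "\<dots> = xs ! 0" unfolding f_def using ij by auto
      finally show ?thesis using ne by (simp add: hd_conv_nth)
    qed
    have last': "last xs' = last xs"
    proof -
      have l0: "length xs' - 1 < length xs'" using walk' unfolding is_walk_def by simp
      have "last xs' = xs' ! (length xs' - 1)" using walk' unfolding is_walk_def by (simp add: last_conv_nth)
      also have "\<dots> = xs ! f (length xs' - 1)" using nx l0 by simp
      also have "f (length xs' - 1) = n - 1" unfolding f_def using lx' ij n_def by auto
      finally show ?thesis using ne n_def by (simp add: last_conv_nth)
    qed
    have "length xs' < length xs" using lx' ij n_def by auto
    then obtain xs'' ds'' where "is_path Gp xs'' ds''" "\<not> path_blocked G C xs'' ds''"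
      "hd xs'' = hd xs'" "last xs'' = last xs'"
      using less.hyps[OF _ walk' less.prems(2) valid] by blast
    then show ?thesis using hd' last' by auto
  qed
qed



lemma chain_to_B:
  assumes "(x, z) \<in> G\<^sup>+" and proj: "\<And>a b. (a, b) \<in> G \<Longrightarrow> (fst a, fst b) \<in> S"
    and "fst z \<in> B \<union> C" and "fst x \<notin> B" "fst x \<notin> anc S C"
  shows "\<exists>ws. 2 \<le> length ws \<and> hd ws = fst x \<and> last ws \<in> B \<and>
     (\<forall>i. Suc i < length ws \<longrightarrow> (ws ! i, ws ! Suc i) \<in> S \<and> ws ! i \<notin> B) \<and>
     (\<forall>i. 0 < i \<and> Suc i < length ws \<longrightarrow> ws ! i \<notin> C)"
  using assms(1,4,5)
proof (induction x rule: converse_trancl_induct)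
  case (base x)
  have e: "(fst x, fst z) \<in> S" using proj base by blast
  have "fst z \<notin> C"
  proof
    assume "fst z \<in> C"
    then have "fst x \<in> anc S C" unfolding anc_def using e by blast
    then show False using base by simp
  qed
  then have zB: "fst z \<in> B" using assms(3) by simp
  show ?case
    apply (rule exI[of _ "[fst x, fst z]"])
    using e zB base by (auto simp: less_Suc_eq nth_Cons')
next
  case (step x y)
  have e: "(fst x, fst y) \<in> S" using proj step by blast
  show ?case
  proof (cases "fst y \<in> B")
    case True
    show ?thesis
      apply (rule exI[of _ "[fst x, fst y]"])
      using e True step by (auto simp: less_Suc_eq nth_Cons')
  next
    case yB: False
    have yC: "fst y \<notin> C"
    proof
      assume "fst y \<in> C"
      then have "fst x \<in> anc S C" unfolding anc_def using e by blast
      then show False using step by simp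
    qed
    have ya: "fst y \<notin> anc S C"
    proof
      assume "fst y \<in> anc S C"
      then have "fst x \<in> anc S C" unfolding anc_def using e by (auto intro: trancl_into_trancl2)
      then show False using step by simp
    qed
    obtain ws where ws: "2 \<le> length ws" "hd ws = fst y" "last ws \<in> B"
      "\<forall>i. Suc i < length ws \<longrightarrow> (ws ! i, ws ! Suc i) \<in> S \<and> ws ! i \<notin> B"
      "\<forall>i. 0 < i \<and> Suc i < length ws \<longrightarrow> ws ! i \<notin> C"
      using step.IH[OF yB ya] by blast
    have w0: "ws ! 0 = fst y" using ws(1,2) by (cases ws) auto
    have h1: "\<forall>i. Suc i < length (fst x # ws) \<longrightarrow> ((fst x # ws) ! i, (fst x # ws) ! Suc i) \<in> S \<and> (fst x # ws) ! i \<notin> B"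
    proof (intro allI impI)
      fix i assume i: "Suc i < length (fst x # ws)"
      show "((fst x # ws) ! i, (fst x # ws) ! Suc i) \<in> S \<and> (fst x # ws) ! i \<notin> B"
      proof (cases i)
        case 0 then show ?thesis using e w0 step by simp
      next
        case (Suc i') then show ?thesis using ws(4) i by simp
      qed
    qed
    have h2: "\<forall>i. 0 < i \<and> Suc i < length (fst x # ws) \<longrightarrow> (fst x # ws) ! i \<notin> C"
    proof (intro allI impI)
      fix i assume i: "0 < i \<and> Suc i < length (fst x # ws)"
      then obtain i' where i': "i = Suc i'" by (cases i) auto
      show "(fst x # ws) ! i \<notin> C"
      proof (cases i')
        case 0 then show ?thesis using i' w0 yC by simp
      next
        case (Suc i'') then show ?thesis using ws(5) i i' by simp
      qed
    qed
    show ?thesis using h1 h2 ws by (intro exI[of _ "fst x # ws"]) auto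
  qed
qed

lemma le_pred_all:
  assumes "\<forall>l. p \<le> l \<and> l \<le> j - 1 \<longrightarrow> P l"
  shows "\<forall>l. p \<le> l \<and> l < (j::nat) \<longrightarrow> P l"
proof (intro allI impI)
  fix l assume "p \<le> l \<and> l < j"
  then have "p \<le> l \<and> l \<le> j - 1" by linarith
  then show "P l" using assms by blast
qed

locale LS =
  fixes V W :: "'a set" and D :: "'a tdg" and G :: "(('a \<times> nat) \<times> ('a \<times> nat)) set"
    and t' :: nat and A B C E :: "'a set" and t :: nat and xs :: "('a \<times> nat) list"
    and ds :: "bool list" and Z :: "('a \<times> nat) set"
  assumes proper: "proper_pair V W t' D G"
    and A_sub: "A \<subseteq> V \<union> W" and C_sub: "C \<subseteq> V \<union> W" and B_sub: "B \<subseteq> V"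
    and disj: "A \<inter> B = {}" "A \<inter> C = {}" "B \<inter> C = {}"
    and E_ta: "tail_ancestral V D E"
    and E_de: "tail_de D B \<inter> E = {}"
    and E_C: "E \<subseteq> C"
    and E_pa: "tail_pa D B \<subseteq> E"
    and tpos: "0 < t" and tle: "t \<le> t'"
    and path: "is_path G xs ds"
    and hdA: "hd xs \<in> nu_bar W (t - 1) A" and lastB: "last xs \<in> nu t B"
    and unbl: "\<not> path_blocked G Z xs ds"
    and sep: "tdg_delta_sep D A B C"
    and Z_def: "Z = nu_bar W (t - 1) (B \<union> C) \<union> nu t E"
begin

lemma VW: "V \<inter> W = {}" using proper unfolding proper_pair_def is_tdg_def by auto

lemma edge_prop:
  assumes "(a, b) \<in> G"
  shows "snd a \<le> snd b \<and> (fst a, fst b) \<in> star_edges D \<and> (snd a = snd b \<longrightarrow> (fst a, fst b) \<in> tedges D)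
    \<and> a \<in> unrolled_nodes V W t' \<and> b \<in> unrolled_nodes V W t'"
proof -
  obtain i s j u where ab: "a = (i, s)" "b = (j, u)" by (cases a, cases b) auto
  have ud: "is_unrolled_dag V W t' G" and rr: "is_rolled D G \<or> G = unroll V W t' D"
    using proper unfolding proper_pair_def by auto
  have su: "s \<le> u" and nodes: "a \<in> unrolled_nodes V W t'" "b \<in> unrolled_nodes V W t'"
    using ud assms ab unfolding is_unrolled_dag_def by auto
  have "(i, j) \<in> star_edges D \<and> (s = u \<longrightarrow> (i, j) \<in> tedges D)"
    using rr
  proof
    assume "is_rolled D G"
    then show ?thesis using assms ab su unfolding is_rolled_def by blast
  next
    assume "G = unroll V W t' D"
    then show ?thesis using assms ab unfolding unroll_def star_edges_def by auto
  qed
  then show ?thesis using su nodes ab by simp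
qed

lemma node_prop:
  assumes "a \<in> unrolled_nodes V W t'"
  shows "(0 < snd a \<longrightarrow> fst a \<in> V) \<and> (fst a \<in> W \<longrightarrow> snd a = 0) \<and> fst a \<in> V \<union> W"
  using assms VW unfolding unrolled_nodes_def by auto

lemma tr_time: "(a, b) \<in> G\<^sup>+ \<Longrightarrow> snd a \<le> snd b"
  by (induction rule: trancl_induct) (auto dest: edge_prop)

lemma tr_star: "(a, b) \<in> G\<^sup>+ \<Longrightarrow> (fst a, fst b) \<in> (star_edges D)\<^sup>+"
  by (induction rule: trancl_induct) (auto dest: edge_prop intro: trancl_into_trancl)

lemma tr_ted: "(a, b) \<in> G\<^sup>+ \<Longrightarrow> snd a = snd b \<Longrightarrow> (fst a, fst b) \<in> (tedges D)\<^sup>+"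
proof (induction rule: trancl_induct)
  case (base y) then show ?case using edge_prop[of a y] by auto
next
  case (step y z)
  have "snd a \<le> snd y" using step(1) tr_time by blast
  moreover have "snd y \<le> snd z" using step(2) edge_prop by blast
  ultimately have eq: "snd a = snd y" "snd y = snd z" using step by auto
  have "(fst y, fst z) \<in> tedges D" using edge_prop[of y z] eq step by auto
  moreover have "(fst a, fst y) \<in> (tedges D)\<^sup>+" using step eq by simp
  ultimately show ?case by (auto intro: trancl_into_trancl)
qed

lemma tr_TA: "(a, b) \<in> G\<^sup>+ \<Longrightarrow> snd a = snd b \<Longrightarrow> 0 < snd b \<Longrightarrow> fst b \<in> E \<Longrightarrow> fst a \<in> E"
proof (induction rule: converse_trancl_induct)
  case (base y)
  have "(fst y, fst b) \<in> tedges D" "y \<in> unrolled_nodes V W t'" using base edge_prop[of y b] by auto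
  moreover have "fst y \<in> V" using node_prop[of y] base calculation by auto
  ultimately show ?case using base E_ta unfolding tail_ancestral_def by blast
next
  case (step y z)
  have "snd z \<le> snd b" using step(2) tr_time by blast
  moreover have "snd y \<le> snd z" using step(1) edge_prop by blast
  ultimately have eq: "snd y = snd z" "snd z = snd b" using step by auto
  then have "fst z \<in> E" using step by simp
  moreover have "(fst y, fst z) \<in> tedges D" "y \<in> unrolled_nodes V W t'" using step(1) eq edge_prop[of y z] by auto
  moreover have "fst y \<in> V" using node_prop[of y] step eq calculation by auto
  ultimately show ?case using E_ta unfolding tail_ancestral_def by blast
qed

lemma tr_NB: "(a, c) \<in> G\<^sup>+ \<Longrightarrow> snd a = snd c \<Longrightarrow> fst a \<in> B \<Longrightarrow> fst c \<in> E \<Longrightarrow> False"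
proof -
  assume h: "(a, c) \<in> G\<^sup>+" "snd a = snd c" "fst a \<in> B" "fst c \<in> E"
  have "(fst a, fst c) \<in> (tedges D)\<^sup>+" using tr_ted h by blast
  moreover have "fst c \<notin> B" using h E_C disj by auto
  ultimately have "fst c \<in> tail_de D B" unfolding tail_de_def using h by blast
  then show False using E_de h by auto
qed

lemma Z_prop: "z \<in> Z \<Longrightarrow> snd z \<le> t \<and> fst z \<in> B \<union> C \<and> (snd z = t \<longrightarrow> fst z \<in> E)"
  unfolding Z_def nu_bar_def nu_def using tpos E_C by auto

lemma inZ: "a \<in> unrolled_nodes V W t' \<Longrightarrow> fst a \<in> B \<union> C \<Longrightarrow> snd a \<le> t - 1 \<Longrightarrow> a \<in> Z"
proof -
  assume h: "a \<in> unrolled_nodes V W t'" "fst a \<in> B \<union> C" "snd a \<le> t - 1"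
  obtain i s where a: "a = (i, s)" by (cases a)
  show "a \<in> Z"
  proof (cases "i \<in> W")
    case True then have "s = 0" using node_prop[OF h(1)] a by simp
    then show ?thesis unfolding Z_def nu_bar_def using True h a by auto
  next
    case False then show ?thesis unfolding Z_def nu_bar_def using h a by auto
  qed
qed


lemma len_xs: "length xs = Suc (length ds)" "xs \<noteq> []"
  using path unfolding is_path_def by auto

lemma p_edge: "k < length ds \<Longrightarrow> if ds ! k then (xs ! k, xs ! Suc k) \<in> G else (xs ! Suc k, xs ! k) \<in> G"
  using path unfolding is_path_def by auto

lemma p_hd: "fst (xs ! 0) \<in> A" "snd (xs ! 0) \<le> t - 1"
proof -
  have "xs ! 0 \<in> nu_bar W (t - 1) A" using hdA len_xs by (simp add: hd_conv_nth)
  then show "fst (xs ! 0) \<in> A" "snd (xs ! 0) \<le> t - 1" unfolding nu_bar_def by auto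
qed

lemma p_last: "fst (xs ! length ds) \<in> B" "snd (xs ! length ds) = t"
proof -
  have "xs ! length ds \<in> nu t B" using lastB len_xs by (simp add: last_conv_nth)
  then show "fst (xs ! length ds) \<in> B" "snd (xs ! length ds) = t" unfolding nu_def by auto
qed

lemma n_pos: "0 < length ds"
proof (rule ccontr)
  assume "\<not> 0 < length ds"
  then have "length ds = 0" by simp
  then show False using p_hd p_last disj by auto
qed

lemma p_node: "k \<le> length ds \<Longrightarrow> xs ! k \<in> unrolled_nodes V W t'"
proof -
  assume k: "k \<le> length ds"
  show ?thesis
  proof (cases "k < length ds")
    case True
    then show ?thesis using p_edge[OF True] edge_prop by (auto split: if_splits)
  next
    case False
    then have k': "k = Suc (length ds - 1)" "length ds - 1 < length ds" using k n_pos by auto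
    then show ?thesis using p_edge[OF k'(2)] edge_prop by (auto split: if_splits)
  qed
qed

lemma unbl_nc: "is_noncollider ds k \<Longrightarrow> xs ! k \<notin> Z"
  using unbl unfolding path_blocked_def by blast

lemma unbl_c: "is_collider ds k \<Longrightarrow> xs ! k \<in> anc G Z \<union> Z"
  using unbl unfolding path_blocked_def by blast

lemma FW: "i < p \<Longrightarrow> p \<le> length ds \<Longrightarrow> (\<forall>l. i \<le> l \<and> l < p \<longrightarrow> ds ! l) \<Longrightarrow> (xs ! i, xs ! p) \<in> G\<^sup>+"
proof (induction p)
  case 0 then show ?case by simp
next
  case (Suc p)
  have e: "(xs ! p, xs ! Suc p) \<in> G" using p_edge[of p] Suc.prems by auto
  show ?case
  proof (cases "i = p")
    case True then show ?thesis using e by auto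
  next
    case False
    then have "(xs ! i, xs ! p) \<in> G\<^sup>+" using Suc by auto
    then show ?thesis using e by auto
  qed
qed

lemma BW: "i < p \<Longrightarrow> p \<le> length ds \<Longrightarrow> (\<forall>l. i \<le> l \<and> l < p \<longrightarrow> \<not> ds ! l) \<Longrightarrow> (xs ! p, xs ! i) \<in> G\<^sup>+"
proof (induction p)
  case 0 then show ?case by simp
next
  case (Suc p)
  have e: "(xs ! Suc p, xs ! p) \<in> G" using p_edge[of p] Suc.prems by auto
  show ?case
  proof (cases "i = p")
    case True then show ?thesis using e by auto
  next
    case False
    then have "(xs ! p, xs ! i) \<in> G\<^sup>+" using Suc by auto
    then show ?thesis using e by (auto intro: trancl_into_trancl2)
  qed
qed

lemma anc_time: "x \<in> anc G Z \<union> Z \<Longrightarrow> snd x \<le> t"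
proof -
  assume "x \<in> anc G Z \<union> Z"
  then show ?thesis
  proof
    assume "x \<in> anc G Z"
    then obtain z where "z \<in> Z" "(x, z) \<in> G\<^sup>+" unfolding anc_def by blast
    then show ?thesis using tr_time Z_prop by (meson order_trans)
  next
    assume "x \<in> Z" then show ?thesis using Z_prop by blast
  qed
qed

lemma time_le: "k \<le> length ds \<Longrightarrow> snd (xs ! k) \<le> t"
proof (rule ccontr)
  assume k: "k \<le> length ds" "\<not> snd (xs ! k) \<le> t"
  let ?P = "\<lambda>k. k \<le> length ds \<and> t < snd (xs ! k)"
  define q where "q = (LEAST k. ?P k)"
  have Pq: "?P q" unfolding q_def using LeastI[of ?P k] k by auto
  have q0: "0 < q" using Pq p_hd by (metis gr0I le_trans not_less diff_le_self)
  have "\<not> ?P (q - 1)" using not_less_Least[of "q - 1" ?P] q0 unfolding q_def by simp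
  then have tq1: "snd (xs ! (q - 1)) \<le> t" using Pq by auto
  have dq: "ds ! (q - 1)"
  proof (rule ccontr)
    assume "\<not> ds ! (q - 1)"
    then have "(xs ! q, xs ! (q - 1)) \<in> G" using p_edge[of "q - 1"] q0 Pq by auto
    then show False using edge_prop tq1 Pq by fastforce
  qed
  show False
  proof (cases "\<exists>j. q \<le> j \<and> j < length ds \<and> \<not> ds ! j")
    case True
    then obtain j where j: "q \<le> j" "j < length ds" "\<not> ds ! j" by blast
    have "q - 1 < j" using j q0 by simp
    then obtain p where p: "q - 1 < p" "p \<le> j" "ds ! (p - 1)" "\<not> ds ! p"
      "\<forall>l. q - 1 \<le> l \<and> l < p \<longrightarrow> ds ! l" using dir_change[OF dq j(3)] by blast
    have pc: "is_collider ds p" unfolding is_collider_def using p j by auto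
    have "snd (xs ! q) \<le> snd (xs ! p)"
    proof (cases "q = p")
      case False
      then have "(xs ! q, xs ! p) \<in> G\<^sup>+" using FW[of q p] p j q0 by force
      then show ?thesis using tr_time by blast
    qed simp
    then show False using anc_time[OF unbl_c[OF pc]] Pq by simp
  next
    case False
    then have "\<forall>l. q \<le> l \<and> l < length ds \<longrightarrow> ds ! l" by auto
    moreover have "q \<noteq> length ds" using Pq p_last by auto
    ultimately have "(xs ! q, xs ! length ds) \<in> G\<^sup>+" using FW[of q "length ds"] Pq by auto
    then show False using tr_time Pq p_last by fastforce
  qed
qed

lemma colE: "is_collider ds p \<Longrightarrow> snd (xs ! p) = t \<Longrightarrow> fst (xs ! p) \<in> E"
proof -
  assume pc: "is_collider ds p" and tp: "snd (xs ! p) = t"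
  have "xs ! p \<in> anc G Z \<union> Z" by (rule unbl_c[OF pc])
  then show ?thesis
  proof
    assume "xs ! p \<in> anc G Z"
    then obtain z where z: "z \<in> Z" "(xs ! p, z) \<in> G\<^sup>+" unfolding anc_def by blast
    have "snd z = t" using tr_time[OF z(2)] Z_prop[OF z(1)] tp by simp
    then have "fst z \<in> E" using Z_prop[OF z(1)] by simp
    then show ?thesis using tr_TA[OF z(2)] tp tpos \<open>snd z = t\<close> by simp
  next
    assume "xs ! p \<in> Z" then show ?thesis using Z_prop tp by blast
  qed
qed


definition m where "m = (LEAST k. fst (xs ! k) \<in> B)"

lemma m_props: "fst (xs ! m) \<in> B" "m \<le> length ds" "0 < m" "\<And>k. k < m \<Longrightarrow> fst (xs ! k) \<notin> B"
proof -
  show mB: "fst (xs ! m) \<in> B" unfolding m_def using LeastI[of "\<lambda>k. fst (xs ! k) \<in> B"] p_last by blast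
  show "m \<le> length ds" unfolding m_def using Least_le[of "\<lambda>k. fst (xs ! k) \<in> B"] p_last by blast
  show "\<And>k. k < m \<Longrightarrow> fst (xs ! k) \<notin> B" unfolding m_def using not_less_Least by blast
  show "0 < m"
  proof (rule ccontr)
    assume "\<not> 0 < m"
    then have "m = 0" by simp
    then show False using mB p_hd disj by auto
  qed
qed

lemma node_t: "k \<le> length ds \<Longrightarrow> xs ! k \<notin> Z \<Longrightarrow> fst (xs ! k) \<in> B \<union> C \<Longrightarrow> snd (xs ! k) = t"
proof -
  assume h: "k \<le> length ds" "xs ! k \<notin> Z" "fst (xs ! k) \<in> B \<union> C"
  have "\<not> snd (xs ! k) \<le> t - 1" using inZ[OF p_node[OF h(1)] h(3)] h(2) by blast
  then show ?thesis using time_le[OF h(1)] by linarith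
qed

lemma M1: "ds ! (m - 1)"
proof (rule ccontr)
  assume nd: "\<not> ds ! (m - 1)"
  have tm: "snd (xs ! m) = t"
  proof (cases "m = length ds")
    case True then show ?thesis using p_last by simp
  next
    case False
    then have "is_noncollider ds m" using nd m_props unfolding is_noncollider_def is_collider_def by auto
    then have "xs ! m \<notin> Z" by (rule unbl_nc)
    then show ?thesis using node_t m_props by blast
  qed
  from dir_change_left[of ds "m - 1", OF nd] show False
  proof
    assume "\<forall>l\<le>m - 1. \<not> ds ! l"
    then have "(xs ! m, xs ! 0) \<in> G\<^sup>+" using BW[of 0 m] m_props by auto
    then show False using tr_time tm p_hd tpos by fastforce
  next
    assume "\<exists>p>0. p \<le> m - 1 \<and> ds ! (p - 1) \<and> (\<forall>l. p \<le> l \<and> l \<le> m - 1 \<longrightarrow> \<not> ds ! l)"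
    then obtain p where p: "0 < p" "p \<le> m - 1" "ds ! (p - 1)" "\<forall>l. p \<le> l \<and> l \<le> m - 1 \<longrightarrow> \<not> ds ! l"
      by blast
    have pc: "is_collider ds p" unfolding is_collider_def using p m_props by auto
    have pm: "p < m" using p m_props by linarith
    have "\<forall>l. p \<le> l \<and> l < m \<longrightarrow> \<not> ds ! l" using le_pred_all[OF p(4)] .
    then have tr: "(xs ! m, xs ! p) \<in> G\<^sup>+" using BW[of p m] pm m_props by blast
    have tp: "snd (xs ! p) = t" using tr_time[OF tr] tm time_le[of p] p m_props by simp
    have "fst (xs ! p) \<in> E" using colE[OF pc tp] .
    then show False using tr_NB[OF tr] tm tp m_props by simp
  qed
qed

lemma M2: "0 < k \<Longrightarrow> k < m \<Longrightarrow> is_noncollider ds k \<Longrightarrow> fst (xs ! k) \<notin> C"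
proof
  assume k: "0 < k" "k < m" and nc: "is_noncollider ds k" and kC: "fst (xs ! k) \<in> C"
  have kl: "k < length ds" using nc unfolding is_noncollider_def by simp
  have nZ: "xs ! k \<notin> Z" by (rule unbl_nc[OF nc])
  have tk: "snd (xs ! k) = t" using node_t[OF _ nZ] kl kC by simp
  have kE: "fst (xs ! k) \<notin> E"
  proof
    assume "fst (xs ! k) \<in> E"
    then have "xs ! k \<in> Z" unfolding Z_def nu_def using tk by (cases "xs ! k") auto
    then show False using nZ by simp
  qed
  have "\<not> ds ! (k - 1) \<or> ds ! k" using nc unfolding is_noncollider_def is_collider_def by auto
  then show False
  proof
    assume dk: "ds ! k"
    show False
    proof (cases "\<exists>j. k \<le> j \<and> j < m \<and> \<not> ds ! j")
      case True
      then obtain j where j: "k \<le> j" "j < m" "\<not> ds ! j" by blast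
      have "k < j" using j dk by (cases "k = j") auto
      then obtain p where p: "k < p" "p \<le> j" "ds ! (p - 1)" "\<not> ds ! p"
        "\<forall>l. k \<le> l \<and> l < p \<longrightarrow> ds ! l" using dir_change[OF dk j(3)] by blast
      have pc: "is_collider ds p" unfolding is_collider_def using p j m_props by auto
      have tr: "(xs ! k, xs ! p) \<in> G\<^sup>+" using FW[of k p] p j m_props by auto
      have tp: "snd (xs ! p) = t" using tr_time[OF tr] tk time_le[of p] p j m_props by simp
      have "fst (xs ! p) \<in> E" using colE[OF pc tp] .
      then have "fst (xs ! k) \<in> E" using tr_TA[OF tr] tk tp tpos by simp
      then show False using kE by simp
    next
      case False
      then have all: "\<forall>l. k \<le> l \<and> l < m \<longrightarrow> ds ! l" by auto
      define j where "j = m - 1"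
      have j: "k \<le> j" "Suc j = m" using k m_props unfolding j_def by auto
      have tj: "snd (xs ! j) = t"
      proof (cases "k = j")
        case True then show ?thesis using tk by simp
      next
        case False
        then have kj: "k < j" using j by simp
        have jl: "j \<le> length ds" using j m_props(2) by linarith
        have "\<forall>l. k \<le> l \<and> l < j \<longrightarrow> ds ! l" using all j by simp
        then have "(xs ! k, xs ! j) \<in> G\<^sup>+" using FW[of k j] kj jl by simp
        then have "snd (xs ! k) \<le> snd (xs ! j)" by (rule tr_time)
        then show ?thesis using tk time_le[OF jl] by linarith
      qed
      have dj: "ds ! j" using all j by simp
      have jl: "j < length ds" using j m_props(2) by linarith
      have e: "(xs ! j, xs ! m) \<in> G" using p_edge[OF jl] dj j(2) by simp
      have "snd (xs ! j) \<le> snd (xs ! m)" using edge_prop[OF e] by simp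
      then have tm: "snd (xs ! m) = t" using tj time_le[OF m_props(2)] by simp
      have "(fst (xs ! j), fst (xs ! m)) \<in> tedges D" using edge_prop[OF e] tj tm by simp
      moreover have "fst (xs ! j) \<notin> B" using m_props j by simp
      ultimately have "fst (xs ! j) \<in> tail_pa D B" unfolding tail_pa_def using m_props by blast
      then have jE: "fst (xs ! j) \<in> E" using E_pa by blast
      show False
      proof (cases "k = j")
        case True then show False using jE kE by simp
      next
        case False
        then have "0 < j" using j k by simp
        then have "is_noncollider ds j" unfolding is_noncollider_def is_collider_def
          using dj jl by simp
        then have "xs ! j \<notin> Z" by (rule unbl_nc)
        moreover have "xs ! j \<in> Z" unfolding Z_def nu_def using tj jE by (cases "xs ! j") auto
        ultimately show False by simp
      qed
    qed
  next
    assume dk: "\<not> ds ! (k - 1)"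
    from dir_change_left[of ds "k - 1", OF dk] show False
    proof
      assume "\<forall>l\<le>k - 1. \<not> ds ! l"
      then have "\<forall>l. 0 \<le> l \<and> l < k \<longrightarrow> \<not> ds ! l" using le_pred_all[of 0 k "\<lambda>l. \<not> ds ! l"] by simp
      then have "(xs ! k, xs ! 0) \<in> G\<^sup>+" using BW[of 0 k] k kl by simp
      then show False using tr_time tk p_hd tpos by fastforce
    next
      assume "\<exists>p>0. p \<le> k - 1 \<and> ds ! (p - 1) \<and> (\<forall>l. p \<le> l \<and> l \<le> k - 1 \<longrightarrow> \<not> ds ! l)"
      then obtain p where p: "0 < p" "p \<le> k - 1" "ds ! (p - 1)" "\<forall>l. p \<le> l \<and> l \<le> k - 1 \<longrightarrow> \<not> ds ! l"
        by blast
      have pc: "is_collider ds p" unfolding is_collider_def using p k kl by auto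
      have pk: "p < k" using p k by linarith
      have "\<forall>l. p \<le> l \<and> l < k \<longrightarrow> \<not> ds ! l" using le_pred_all[OF p(4)] .
      then have tr: "(xs ! k, xs ! p) \<in> G\<^sup>+" using BW[of p k] pk kl by simp
      have tp: "snd (xs ! p) = t" using tr_time[OF tr] tk time_le[of p] p kl by simp
      have "fst (xs ! p) \<in> E" using colE[OF pc tp] .
      then have "fst (xs ! k) \<in> E" using tr_TA[OF tr] tk tp tpos by simp
      then show False using kE by simp
    qed
  qed
qed


definition bad where
  "bad k \<longleftrightarrow> 0 < k \<and> k < m \<and> is_collider ds k \<and> fst (xs ! k) \<notin> anc (star_edges D) C \<union> C"

lemma bad_chain:
  assumes "bad k"
  shows "\<exists>ws. 2 \<le> length ws \<and> hd ws = fst (xs ! k) \<and> last ws \<in> B \<and>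
     (\<forall>i. Suc i < length ws \<longrightarrow> (ws ! i, ws ! Suc i) \<in> star_edges D \<and> ws ! i \<notin> B) \<and>
     (\<forall>i. 0 < i \<and> Suc i < length ws \<longrightarrow> ws ! i \<notin> C)"
proof -
  have b: "0 < k" "k < m" "is_collider ds k" "fst (xs ! k) \<notin> anc (star_edges D) C \<union> C"
    using assms unfolding bad_def by auto
  have kB: "fst (xs ! k) \<notin> B" using m_props b by simp
  have "xs ! k \<notin> Z"
  proof
    assume "xs ! k \<in> Z"
    then have "fst (xs ! k) \<in> B \<union> C" using Z_prop by blast
    then show False using kB b by simp
  qed
  then have "xs ! k \<in> anc G Z" using unbl_c[OF b(3)] by simp
  then obtain z where z: "z \<in> Z" "(xs ! k, z) \<in> G\<^sup>+" unfolding anc_def by blast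
  have proj: "\<And>a b. (a, b) \<in> G \<Longrightarrow> (fst a, fst b) \<in> star_edges D" using edge_prop by blast
  show ?thesis using chain_to_B[OF z(2) proj, of B C] Z_prop[OF z(1)] kB b(4) by blast
qed

lemma walk_exists:
  "\<exists>xsD dsD. is_walk {(i, j) \<in> star_edges D. i \<notin> B} xsD dsD \<and>
     \<not> path_blocked (star_edges D) C xsD dsD \<and> hd xsD \<in> A \<and> last xsD \<in> B"
proof -
  let ?Gp = "{(i, j) \<in> star_edges D. i \<notin> B}"
  have "\<exists>K ws. K \<le> m \<and> 0 < K \<and>
     (\<forall>k. 0 < k \<and> k < K \<and> is_collider ds k \<longrightarrow> fst (xs ! k) \<in> anc (star_edges D) C \<union> C) \<and>
     ws \<noteq> [] \<and> ws ! 0 = fst (xs ! K) \<and> last ws \<in> B \<and>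
     (\<forall>i. Suc i < length ws \<longrightarrow> (ws ! i, ws ! Suc i) \<in> star_edges D \<and> ws ! i \<notin> B) \<and>
     (\<forall>i. 0 < i \<and> Suc i < length ws \<longrightarrow> ws ! i \<notin> C) \<and>
     (2 \<le> length ws \<longrightarrow> fst (xs ! K) \<notin> C)"
  proof (cases "\<exists>k. bad k")
    case True
    then obtain k0 where k0: "bad k0" by blast
    define K where "K = (LEAST k. bad k)"
    have bK: "bad K" unfolding K_def using LeastI[of bad k0] k0 by blast
    have K2: "\<forall>k. 0 < k \<and> k < K \<and> is_collider ds k \<longrightarrow> fst (xs ! k) \<in> anc (star_edges D) C \<union> C"
    proof (intro allI impI)
      fix k assume k: "0 < k \<and> k < K \<and> is_collider ds k"
      have "\<not> bad k" using not_less_Least[of k bad] k unfolding K_def by blast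
      moreover have "k < m" using k bK unfolding bad_def by simp
      ultimately show "fst (xs ! k) \<in> anc (star_edges D) C \<union> C" using k unfolding bad_def by blast
    qed
    obtain ws where ws: "2 \<le> length ws" "hd ws = fst (xs ! K)" "last ws \<in> B"
      "\<forall>i. Suc i < length ws \<longrightarrow> (ws ! i, ws ! Suc i) \<in> star_edges D \<and> ws ! i \<notin> B"
      "\<forall>i. 0 < i \<and> Suc i < length ws \<longrightarrow> ws ! i \<notin> C"
      using bad_chain[OF bK] by blast
    have "ws \<noteq> []" using ws(1) by auto
    moreover have "ws ! 0 = fst (xs ! K)" using ws(2) calculation by (simp add: hd_conv_nth)
    moreover have "fst (xs ! K) \<notin> C" "K \<le> m" "0 < K" using bK unfolding bad_def by auto
    ultimately show ?thesis using K2 ws by blast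
  next
    case False
    have K2: "\<forall>k. 0 < k \<and> k < m \<and> is_collider ds k \<longrightarrow> fst (xs ! k) \<in> anc (star_edges D) C \<union> C"
      using False unfolding bad_def by blast
    show ?thesis
      apply (rule exI[of _ m], rule exI[of _ "[fst (xs ! m)]"])
      using K2 m_props by auto
  qed
  then obtain K ws where K1: "K \<le> m" "0 < K"
    and K2: "\<forall>k. 0 < k \<and> k < K \<and> is_collider ds k \<longrightarrow> fst (xs ! k) \<in> anc (star_edges D) C \<union> C"
    and W1: "ws \<noteq> []" "ws ! 0 = fst (xs ! K)" "last ws \<in> B"
    and W2: "\<forall>i. Suc i < length ws \<longrightarrow> (ws ! i, ws ! Suc i) \<in> star_edges D \<and> ws ! i \<notin> B"
    and W3: "\<forall>i. 0 < i \<and> Suc i < length ws \<longrightarrow> ws ! i \<notin> C"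
    and W4: "2 \<le> length ws \<longrightarrow> fst (xs ! K) \<notin> C"
    by blast
  define L where "L = K + length ws"
  define xsD where "xsD = map (\<lambda>k. if k < K then fst (xs ! k) else ws ! (k - K)) [0..<L]"
  define dsD where "dsD = map (\<lambda>k. k < K \<longrightarrow> ds ! k) [0..<L - 1]"
  have lx: "length xsD = L" and ld: "length dsD = L - 1" unfolding xsD_def dsD_def by auto
  have L0: "K < L" using W1 unfolding L_def by (cases ws) auto
  have nx: "xsD ! k = (if k \<le> K then fst (xs ! k) else ws ! (k - K))" if "k < L" for k
    unfolding xsD_def using that W1 by auto
  have nd: "dsD ! k = (k < K \<longrightarrow> ds ! k)" if "k < L - 1" for k
    unfolding dsD_def using that by auto
  have Kn: "K \<le> length ds" using K1 m_props by simp
  have walk: "is_walk ?Gp xsD dsD"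
    unfolding is_walk_def
  proof (intro conjI allI impI)
    show "xsD \<noteq> []" using lx L0 by auto
    show "length dsD = length xsD - 1" using lx ld by simp
    fix k assume k: "k < length dsD"
    then have kL: "k < L - 1" using ld by simp
    show "if dsD ! k then (xsD ! k, xsD ! Suc k) \<in> ?Gp else (xsD ! Suc k, xsD ! k) \<in> ?Gp"
    proof (cases "k < K")
      case True
      have kl: "k < length ds" using True Kn by simp
      have x1: "xsD ! k = fst (xs ! k)" "xsD ! Suc k = fst (xs ! Suc k)" using nx[of k] nx[of "Suc k"] kL True by auto
      have d1: "dsD ! k = ds ! k" using nd[OF kL] True by simp
      have kB: "fst (xs ! k) \<notin> B" using m_props True K1 by simp
      show ?thesis
      proof (cases "ds ! k")
        case True
        then have "(xs ! k, xs ! Suc k) \<in> G" using p_edge[OF kl] by simp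
        then show ?thesis using edge_prop x1 d1 True kB by auto
      next
        case False
        then have e: "(xs ! Suc k, xs ! k) \<in> G" using p_edge[OF kl] by simp
        have "Suc k \<noteq> m"
        proof
          assume "Suc k = m"
          then have "m - 1 = k" by simp
          then show False using False M1 by simp
        qed
        then have "Suc k < m" using \<open>k < K\<close> K1 by simp
        then have "fst (xs ! Suc k) \<notin> B" using m_props by simp
        then show ?thesis using edge_prop[OF e] x1 d1 False by auto
      qed
    next
      case False
      have x1: "xsD ! k = ws ! (k - K)" "xsD ! Suc k = ws ! Suc (k - K)"
        using nx[of k] nx[of "Suc k"] kL False W1 by (auto simp: Suc_diff_le)
      have d1: "dsD ! k" using nd[OF kL] False by simp
      have "Suc (k - K) < length ws" using kL False unfolding L_def by simp
      then show ?thesis using W2 x1 d1 by auto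
    qed
  qed
  have valid: "\<not> path_blocked (star_edges D) C xsD dsD"
  proof
    assume "path_blocked (star_edges D) C xsD dsD"
    then obtain k where kb: "(is_noncollider dsD k \<and> xsD ! k \<in> C) \<or>
        (is_collider dsD k \<and> xsD ! k \<notin> anc (star_edges D) C \<union> C)" unfolding path_blocked_def by blast
    have k0: "0 < k" "k < L - 1" using kb ld unfolding is_collider_def is_noncollider_def by auto
    show False
    proof (cases "k < K")
      case True
      have kl: "k < length ds" using True Kn by simp
      have x1: "xsD ! k = fst (xs ! k)" using nx[of k] k0 True by simp
      have d1: "dsD ! k = ds ! k" "dsD ! (k - 1) = ds ! (k - 1)" using nd[of k] nd[of "k - 1"] k0 True by auto
      have ce: "is_collider dsD k = is_collider ds k" "is_noncollider dsD k = is_noncollider ds k"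
        unfolding is_collider_def is_noncollider_def using d1 k0 kl ld by auto
      show False
      proof (cases "is_collider ds k")
        case True
        then show False using K2 k0 \<open>k < K\<close> kb ce x1 unfolding is_noncollider_def by auto
      next
        case False
        then have "is_noncollider ds k" unfolding is_noncollider_def using k0 kl by simp
        then have "fst (xs ! k) \<notin> C" using M2 k0 \<open>k < K\<close> K1 by simp
        then show False using kb ce x1 False by auto
      qed
    next
      case False
      have nc: "\<not> is_collider dsD k" unfolding is_collider_def using nd[of k] k0 False by simp
      then have cin: "xsD ! k \<in> C" using kb by auto
      show False
      proof (cases "k = K")
        case True
        then have "2 \<le> length ws" using k0 unfolding L_def by simp
        then show False using W4 cin nx[of k] True k0 by simp
      next
        case False
        then have "K < k" using \<open>\<not> k < K\<close> by simp
        then have "xsD ! k = ws ! (k - K)" "0 < k - K" "Suc (k - K) < length ws"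
          using nx[of k] k0 unfolding L_def by auto
        then show False using W3 cin by auto
      qed
    qed
  qed
  have "xsD \<noteq> []" using lx L0 by auto
  then have "hd xsD = fst (xs ! 0)" using nx[of 0] L0 by (simp add: hd_conv_nth)
  then have hA: "hd xsD \<in> A" using p_hd by simp
  have "last xsD = xsD ! (L - 1)" using lx \<open>xsD \<noteq> []\<close> by (simp add: last_conv_nth)
  also have "\<dots> = last ws"
  proof (cases "length ws = 1")
    case True
    then have "L - 1 = K" unfolding L_def by simp
    then show ?thesis using nx[of "L - 1"] L0 W1 True by (simp add: last_conv_nth)
  next
    case False
    then have "K < L - 1" using W1 unfolding L_def by (cases ws) auto
    then show ?thesis using nx[of "L - 1"] W1 unfolding L_def by (simp add: last_conv_nth)
  qed
  finally have lB: "last xsD \<in> B" using W1 by simp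
  show ?thesis using walk valid hA lB by blast
qed

theorem contradiction: False
proof -
  obtain xsD dsD where w: "is_walk {(i, j) \<in> star_edges D. i \<notin> B} xsD dsD"
    "\<not> path_blocked (star_edges D) C xsD dsD" "hd xsD \<in> A" "last xsD \<in> B"
    using walk_exists by blast
  obtain xs' ds' where p: "is_path {(i, j) \<in> star_edges D. i \<notin> B} xs' ds'"
    "\<not> path_blocked (star_edges D) C xs' ds'" "hd xs' = hd xsD" "last xs' = last xsD"
    using shortcut[OF w(1) _ w(2)] by blast
  have "sep_gen (star_edges D) {(i, j) \<in> star_edges D. i \<notin> B} A B C"
    using sep unfolding tdg_delta_sep_def delta_sep_def by simp
  then show False using p w unfolding sep_gen_def by auto
qed

end

theorem lemma1:
  fixes V W :: "'a set" and D :: "'a tdg" and G :: "(('a \<times> nat) \<times> ('a \<times> nat)) set"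
    and t' :: nat and A B C E :: "'a set"
  assumes proper: "proper_pair V W t' D G"
    and A_sub: "A \<subseteq> V \<union> W" and C_sub: "C \<subseteq> V \<union> W" and B_sub: "B \<subseteq> V"
    and disj: "A \<inter> B = {}" "A \<inter> C = {}" "B \<inter> C = {}"
    and E_ta: "tail_ancestral V D E"
    and E_de: "tail_de D B \<inter> E = {}"
    and E_C: "E \<subseteq> C"
    and E_pa: "tail_pa D B \<subseteq> E"
    and sep: "tdg_delta_sep D A B C"
  shows "\<forall>t. 0 < t \<and> t \<le> t' \<longrightarrow>
           d_sep G (nu_bar W (t - 1) A) (nu t B) (nu_bar W (t - 1) (B \<union> C) \<union> nu t E)"
proof (intro allI impI)
  fix t assume t: "0 < t \<and> t \<le> t'"
  show "d_sep G (nu_bar W (t - 1) A) (nu t B) (nu_bar W (t - 1) (B \<union> C) \<union> nu t E)"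
    unfolding d_sep_def sep_gen_def
  proof (intro allI impI)
    fix xs ds
    assume h: "is_path G xs ds \<and> hd xs \<in> nu_bar W (t - 1) A \<and> last xs \<in> nu t B"
    show "path_blocked G (nu_bar W (t - 1) (B \<union> C) \<union> nu t E) xs ds"
    proof (rule ccontr)
      assume nb: "\<not> path_blocked G (nu_bar W (t - 1) (B \<union> C) \<union> nu t E) xs ds"
      interpret LS V W D G t' A B C E t xs ds "nu_bar W (t - 1) (B \<union> C) \<union> nu t E"
        apply unfold_locales
        using proper A_sub C_sub B_sub disj E_ta E_de E_C E_pa sep t h nb by auto
      show False by (rule contradiction)
    qed
  qed
qed

end
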